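(* Let $S \cdot I$ be a well-formed instrumented notebook state and let $op$ be any notebook operation ($\textsc{Run}(i)$, $\textsc{Edit}(i,c)$, $\textsc{Insert}(i,c)$, $\textsc{Delete}(i)$ or $\textsc{Move}(s,d)$). If $S \cdot I \xRightarrow{op} S' \cdot I'$ is a transition of the instrumented semantics, then $S' \cdot I'$ is well-formed.
   Context: Locations and stores. $\mathrm{Loc}$ is a set of locations (top-level variable names $x$, and DataFrame columns $d.c$ where $d$ is an immutable DataFrame address and $c$ a column name). $\mathrm{Val}$ is a set of values. A store is a map $\Sigma : \mathrm{Loc} \to \mathrm{Val}$, and $\emptyset$ denotes the empty store. $\mathit{Code}$ and $\mathit{Output}$ are unspecified sets; the output $\bot$ means "not yet executed". Cell evaluation. Standard cell evaluation is a given relation (a black box modelling the language runtime) written $c;\Sigma \Downarrow o \cdot \Sigma'$: executing code $c$ in store $\Sigma$ produces output $o$ and resulting store $\Sigma'$. Instrumented cell evaluation $c;\Sigma \Downarrow o \cdot \Sigma' \cdot r \cdot w$ extends it: it holds when $c;\Sigma \Downarrow o\cdot\Sigma'$, $r \subseteq \mathrm{Loc}$ is the set of locations of $\Sigma$ read during the evaluation of $c$, and $w \subseteq \mathrm{Loc}$ is the set of locations where $\Sigma'$ is updated from $\Sigma$. Notation. For a sequence $X = X_1,\dots,X_n$, $X_{i..j}$ is the subsequence $X_i,\dots,X_j$, and $X[i:=v]$ is $X$ with position $i$ replaced by $v$. For a sequence of sets $W$, $\bigcup W_{i..j} = W_i \cup \dots \cup W_j$ (empty if $i>j$). Notebook states.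 A notebook state is $S = (C, O, \Sigma)$ with $C = C_1,\dots,C_n$ cell codes, $O = O_1,\dots,O_n$ cell outputs, and $\Sigma$ the current store. An instrumentation is $I = (T, R, W)$ with tags $T_i \in \{\textsc{clean}, \textsc{stale}\}$, read sets $R_i \subseteq \mathrm{Loc}$ and write sets $W_i \subseteq \mathrm{Loc}$ for $i = 1,\dots,n$. Rerun consistency. $R$ and $W$ are rerun consistent for cell $i$ if all of: (NoReadAndWrite) $R_i \cap W_i = \emptyset$; (WriteAboveRead) $R_i \subseteq \bigcup W_{1..i-1}$; (NoReadAboveWrite) $R_i \cap \bigcup W_{i+1..n} = \emptyset$; (NoWriteBelowRead) $W_i \cap \bigcup R_{1..i-1} = \emptyset$. Staleness predicates. $\textsc{ForwardStale}(R,W,W',i,j)$ holds iff $j > i$ and $(W_i \cup W'_i) \cap (R_j \cup W_j) \neq \emptyset$. $\textsc{LastWriter}(W,i,\ell) = \max\{k < i \mid \ell \in W_k\}$. $\textsc{BackwardStale}(W,W',i,j)$ holds iff $j < i$ and $j = \textsc{LastWriter}(W,i,\ell)$ for some $\ell \in W_i \setminus W'_i$. Instrumented semantics $S\cdot I \xRightarrow{op} S'\cdot I'$: - $\textsc{Run}(i)$: if $S = (C,O,\Sigma)$, $C_i;\Sigma \Downarrow o\cdot\Sigma'\cdot r\cdot w$, $R' = R[i:=r]$, $W' = W[i:=w]$, and $R',W'$ are rerun consistent for $i$, then $(C,O,\Sigma)\cdot(T,R,W) \xRightarrow{\textsc{Run}(i)} (C, O[i:=o], \Sigma')\cdot(T',R',W')$,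 where $T'_j = \textsc{clean}$ if $j = i$; $T'_j = \textsc{stale}$ if $\textsc{ForwardStale}(R,W,W',i,j)$ or $\textsc{BackwardStale}(W,W',i,j)$; and $T'_j = T_j$ otherwise. - $\textsc{Edit}(i,c)$: $C$ becomes $C[i:=c]$; $O$, $\Sigma$, $R$, $W$ unchanged; $T$ becomes $T[i:=\textsc{stale}]$. - $\textsc{Insert}(i,c)$: $C' = C_{1..i-1}, c, C_{i..n}$; $O' = O_{1..i-1}, \bot, O_{i..n}$; $\Sigma$ unchanged; $R' = R_{1..i-1},\emptyset,R_{i..n}$; $W' = W_{1..i-1},\emptyset,W_{i..n}$; $T' = T_{1..i-1},\textsc{stale},T_{i..n}$. - $\textsc{Delete}(i)$: $C' = C_{1..i-1},C_{i+1..n}$; $O' = O_{1..i-1},O_{i+1..n}$; $\Sigma$ unchanged; with $R'' = R[i:=\emptyset]$, $W'' = W[i:=\emptyset]$, let $T''_j = \textsc{stale}$ if $\textsc{ForwardStale}(R,W,W'',i,j)$ or $\textsc{BackwardStale}(W,W'',i,j)$, and $T''_j = T_j$ otherwise; then $R' = R''_{1..i-1},R''_{i+1..n}$, $W' = W''_{1..i-1},W''_{i+1..n}$, $T' = T''_{1..i-1},T''_{i+1..n}$. - $\textsc{Move}(s,d)$: if $s < d$, it is $\textsc{Delete}(s)$ followed by $\textsc{Insert}(d-1, C_s)$; if $s > d$, it is $\textsc{Delete}(s)$ followed by $\textsc{Insert}(d, C_s)$. Well-formedness. $S\cdot I = (C,O,\Sigma)\cdot(T,R,W)$ is well-formed if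 for every $i$ with $T_i = \textsc{clean}$ there exists a store $\Sigma'$ such that (1) $C_i;\Sigma \Downarrow O_i\cdot\Sigma'\cdot R_i\cdot W_i$; (2) $\Sigma$ and $\Sigma'$ agree on every location not in $\bigcup W_{i+1..n}$; (3) $R$ and $W$ are rerun consistent for $i$. *)

theory Defs
  imports Main
begin

text \<open>Locations 'l, values 'v, code 'c, outputs 'o are type parameters.
  Stores are total maps 'l => 'v. Sequences are lists, accessed 1-based
  (position i of the paper is list index i - 1).\<close>

datatype tag = Clean | Stale

type_synonym ('l, 'v) store = "'l \<Rightarrow> 'v"
type_synonym ('c, 'o, 'l, 'v) nbstate = "'c list \<times> 'o list \<times> ('l, 'v) store"
type_synonym 'l instr = "tag list \<times> 'l set list \<times> 'l set list"

datatype 'c nbop = Run nat | Edit nat 'c | Insert nat 'c | Delete nat | Move nat nat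

definition nth1 :: "'a list \<Rightarrow> nat \<Rightarrow> 'a" where
  "nth1 xs i = xs ! (i - 1)"

definition upd1 :: "'a list \<Rightarrow> nat \<Rightarrow> 'a \<Rightarrow> 'a list" where
  "upd1 xs i v = xs[i - 1 := v]"

definition ins1 :: "'a list \<Rightarrow> nat \<Rightarrow> 'a \<Rightarrow> 'a list" where
  "ins1 xs i v = take (i - 1) xs @ v # drop (i - 1) xs"

definition del1 :: "'a list \<Rightarrow> nat \<Rightarrow> 'a list" where
  "del1 xs i = take (i - 1) xs @ drop i xs"

definition Un_range :: "'l set list \<Rightarrow> nat \<Rightarrow> nat \<Rightarrow> 'l set" where
  "Un_range W i j = \<Union> {nth1 W k | k. i \<le> k \<and> k \<le> j}"

text \<open>eval c s out s' is the black-box standard evaluation c; s \<Down> o . s'.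
  ieval c s out s' r w is instrumented evaluation c; s \<Down> o . s' . r . w.
  Since "the set of locations read" is not determined by the black box,
  ieval is a parameter subject to the following requirements: it extends
  eval; w contains every location updated; and r is a genuine read set:
  evaluating in any store agreeing with s on r reads and writes the same
  locations, gives the same output and writes the same values.\<close>

definition instrumented_eval ::
  "('c \<Rightarrow> ('l, 'v) store \<Rightarrow> 'o \<Rightarrow> ('l, 'v) store \<Rightarrow> bool) \<Rightarrow>
   ('c \<Rightarrow> ('l, 'v) store \<Rightarrow> 'o \<Rightarrow> ('l, 'v) store \<Rightarrow> 'l set \<Rightarrow> 'l set \<Rightarrow> bool) \<Rightarrow> bool" where
  "instrumented_eval eval ieval \<longleftrightarrow>
     (\<forall>c s out s' r w. ieval c s out s' r w \<longrightarrow> eval c s out s') \<and>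
     (\<forall>c s out s' r w. ieval c s out s' r w \<longrightarrow> (\<forall>l. l \<notin> w \<longrightarrow> s' l = s l)) \<and>
     (\<forall>c s1 out s1' r w s2. ieval c s1 out s1' r w \<longrightarrow> (\<forall>l\<in>r. s2 l = s1 l) \<longrightarrow>
        ieval c s2 out (\<lambda>l. if l \<in> w then s1' l else s2 l) r w)"

definition rerun_consistent :: "'l set list \<Rightarrow> 'l set list \<Rightarrow> nat \<Rightarrow> bool" where
  "rerun_consistent R W i \<longleftrightarrow>
     (let n = length W in
       nth1 R i \<inter> nth1 W i = {} \<and>
       nth1 R i \<subseteq> Un_range W 1 (i - 1) \<and>
       nth1 R i \<inter> Un_range W (i + 1) n = {} \<and>
       nth1 W i \<inter> Un_range R 1 (i - 1) = {})"

definition forward_stale ::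
  "'l set list \<Rightarrow> 'l set list \<Rightarrow> 'l set list \<Rightarrow> nat \<Rightarrow> nat \<Rightarrow> bool" where
  "forward_stale R W W' i j \<longleftrightarrow>
     j > i \<and> (nth1 W i \<union> nth1 W' i) \<inter> (nth1 R j \<union> nth1 W j) \<noteq> {}"

definition last_writer :: "'l set list \<Rightarrow> nat \<Rightarrow> 'l \<Rightarrow> nat" where
  "last_writer W i l = Max {k. 1 \<le> k \<and> k < i \<and> l \<in> nth1 W k}"

text \<open>j = LastWriter(W,i,l) is only meaningful when some cell above i writes l.\<close>
definition backward_stale :: "'l set list \<Rightarrow> 'l set list \<Rightarrow> nat \<Rightarrow> nat \<Rightarrow> bool" where
  "backward_stale W W' i j \<longleftrightarrow>
     j < i \<and> (\<exists>l \<in> nth1 W i - nth1 W' i.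
        {k. 1 \<le> k \<and> k < i \<and> l \<in> nth1 W k} \<noteq> {} \<and> j = last_writer W i l)"

definition retag :: "tag list \<Rightarrow> 'l set list \<Rightarrow> 'l set list \<Rightarrow> 'l set list \<Rightarrow> nat \<Rightarrow> tag list" where
  "retag T R W W' i =
     map (\<lambda>j. if forward_stale R W W' i j \<or> backward_stale W W' i j then Stale else nth1 T j)
         [1..<length T + 1]"

inductive nb_step ::
  "('c \<Rightarrow> ('l, 'v) store \<Rightarrow> 'o \<Rightarrow> ('l, 'v) store \<Rightarrow> 'l set \<Rightarrow> 'l set \<Rightarrow> bool) \<Rightarrow> 'o \<Rightarrow>
   'c nbop \<Rightarrow> ('c, 'o, 'l, 'v) nbstate \<Rightarrow> 'l instr \<Rightarrow>
   ('c, 'o, 'l, 'v) nbstate \<Rightarrow> 'l instr \<Rightarrow> bool"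
  for ieval bot where
  step_run:
    "\<lbrakk> 1 \<le> i; i \<le> length C;
       ieval (nth1 C i) \<Sigma> out \<Sigma>' r w;
       R' = upd1 R i r; W' = upd1 W i w;
       rerun_consistent R' W' i;
       T' = upd1 (retag T R W W' i) i Clean \<rbrakk>
     \<Longrightarrow> nb_step ieval bot (Run i) (C, Out, \<Sigma>) (T, R, W) (C, upd1 Out i out, \<Sigma>') (T', R', W')"
| step_edit:
    "\<lbrakk> 1 \<le> i; i \<le> length C \<rbrakk>
     \<Longrightarrow> nb_step ieval bot (Edit i c) (C, Out, \<Sigma>) (T, R, W)
           (upd1 C i c, Out, \<Sigma>) (upd1 T i Stale, R, W)"
| step_insert:
    "\<lbrakk> 1 \<le> i; i \<le> length C + 1 \<rbrakk>
     \<Longrightarrow> nb_step ieval bot (Insert i c) (C, Out, \<Sigma>) (T, R, W)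
           (ins1 C i c, ins1 Out i bot, \<Sigma>) (ins1 T i Stale, ins1 R i {}, ins1 W i {})"
| step_delete:
    "\<lbrakk> 1 \<le> i; i \<le> length C;
       R'' = upd1 R i {}; W'' = upd1 W i {};
       T'' = retag T R W W'' i \<rbrakk>
     \<Longrightarrow> nb_step ieval bot (Delete i) (C, Out, \<Sigma>) (T, R, W)
           (del1 C i, del1 Out i, \<Sigma>) (del1 T'' i, del1 R'' i, del1 W'' i)"
| step_move_down:
    "\<lbrakk> s < d;
       nb_step ieval bot (Delete s) (C, Out, \<Sigma>) I S1 I1;
       nb_step ieval bot (Insert (d - 1) (nth1 C s)) S1 I1 S2 I2 \<rbrakk>
     \<Longrightarrow> nb_step ieval bot (Move s d) (C, Out, \<Sigma>) I S2 I2"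
| step_move_up:
    "\<lbrakk> s > d;
       nb_step ieval bot (Delete s) (C, Out, \<Sigma>) I S1 I1;
       nb_step ieval bot (Insert d (nth1 C s)) S1 I1 S2 I2 \<rbrakk>
     \<Longrightarrow> nb_step ieval bot (Move s d) (C, Out, \<Sigma>) I S2 I2"

text \<open>Includes the implicit structural requirement that all sequences have length n.\<close>
definition well_formed ::
  "('c \<Rightarrow> ('l, 'v) store \<Rightarrow> 'o \<Rightarrow> ('l, 'v) store \<Rightarrow> 'l set \<Rightarrow> 'l set \<Rightarrow> bool) \<Rightarrow>
   ('c, 'o, 'l, 'v) nbstate \<Rightarrow> 'l instr \<Rightarrow> bool" where
  "well_formed ieval S I \<longleftrightarrow>
     (case S of (C, Out, \<Sigma>) \<Rightarrow> case I of (T, R, W) \<Rightarrow>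
       let n = length C in
       length Out = n \<and> length T = n \<and> length R = n \<and> length W = n \<and>
       (\<forall>i. 1 \<le> i \<and> i \<le> n \<and> nth1 T i = Clean \<longrightarrow>
          (\<exists>\<Sigma>'. ieval (nth1 C i) \<Sigma> (nth1 Out i) \<Sigma>' (nth1 R i) (nth1 W i) \<and>
                 (\<forall>l. l \<notin> Un_range W (i + 1) n \<longrightarrow> \<Sigma> l = \<Sigma>' l) \<and>
                 rerun_consistent R W i)))"

end

theory Submission
  imports Defs
begin




lemma len_upd1[simp]: "length (upd1 xs i v) = length xs" by (simp add: upd1_def)
lemma len_ins1[simp]: "length (ins1 xs i v) = (if i - 1 \<le> length xs then Suc (length xs) else Suc (length xs))"
  by (simp add: ins1_def)
lemma len_del1[simp]: "1 \<le> i \<Longrightarrow> i \<le> length xs \<Longrightarrow> length (del1 xs i) = length xs - 1"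
  by (simp add: del1_def)
lemma len_retag[simp]: "length (retag T R W W' i) = length T" by (simp add: retag_def del: upt_Suc)

lemma nth1_upd1: "1 \<le> i \<Longrightarrow> i \<le> length xs \<Longrightarrow> 1 \<le> j \<Longrightarrow>
  nth1 (upd1 xs i v) j = (if j = i then v else nth1 xs j)"
  by (auto simp: nth1_def upd1_def nth_list_update)

lemma nth1_ins1: "1 \<le> i \<Longrightarrow> i \<le> length xs + 1 \<Longrightarrow> 1 \<le> j \<Longrightarrow> j \<le> length xs + 1 \<Longrightarrow>
  nth1 (ins1 xs i v) j = (if j < i then nth1 xs j else if j = i then v else nth1 xs (j - 1))"
  by (auto simp: nth1_def ins1_def nth_append min_def nth_Cons' numeral_2_eq_2)

lemma nth1_del1: "1 \<le> i \<Longrightarrow> i \<le> length xs \<Longrightarrow> 1 \<le> j \<Longrightarrow>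
  nth1 (del1 xs i) j = (if j < i then nth1 xs j else nth1 xs (j + 1))"
  by (auto simp: nth1_def del1_def nth_append min_def)

lemma nth1_retag: "1 \<le> j \<Longrightarrow> j \<le> length T \<Longrightarrow> nth1 (retag T R W W' i) j =
  (if forward_stale R W W' i j \<or> backward_stale W W' i j then Stale else nth1 T j)"
  by (simp add: retag_def nth1_def del: upt_Suc)

lemma in_Un_range: "l \<in> Un_range W a b \<longleftrightarrow> (\<exists>k. a \<le> k \<and> k \<le> b \<and> l \<in> nth1 W k)"
  by (auto simp: Un_range_def)

lemma in_Un_range_upd: "1 \<le> i \<Longrightarrow> i \<le> length W \<Longrightarrow> 1 \<le> a \<Longrightarrow>
  l \<in> Un_range (upd1 W i X) a b \<longleftrightarrow> (\<exists>k. a \<le> k \<and> k \<le> b \<and> l \<in> (if k = i then X else nth1 W k))"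
  unfolding in_Un_range
  apply (rule ex_cong1)
  subgoal for k by (cases "k = i") (auto simp: nth1_upd1)
  done

lemma in_Un_range_ins: "1 \<le> i \<Longrightarrow> i \<le> length W + 1 \<Longrightarrow> 1 \<le> a \<Longrightarrow> b \<le> length W + 1 \<Longrightarrow>
  l \<in> Un_range (ins1 W i {}) a b \<longleftrightarrow>
  (\<exists>k. l \<in> nth1 W k \<and> (if k < i then a \<le> k \<and> k \<le> b else a \<le> k + 1 \<and> k + 1 \<le> b))"
  unfolding in_Un_range
proof
  assume "\<exists>k. a \<le> k \<and> k \<le> b \<and> l \<in> nth1 (ins1 W i {}) k"
  then obtain k where k: "a \<le> k" "k \<le> b" "l \<in> nth1 (ins1 W i {}) k" by blast
  assume h: "1 \<le> i" "i \<le> length W + 1" "1 \<le> a" "b \<le> length W + 1"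
  show "\<exists>k. l \<in> nth1 W k \<and> (if k < i then a \<le> k \<and> k \<le> b else a \<le> k + 1 \<and> k + 1 \<le> b)"
  proof (cases "k < i")
    case True with k h show ?thesis by (intro exI[of _ k]) (simp add: nth1_ins1)
  next
    case False
    with k h have "k \<noteq> i" by (auto simp: nth1_ins1)
    with False k h show ?thesis by (intro exI[of _ "k - 1"]) (simp add: nth1_ins1)
  qed
next
  assume "\<exists>k. l \<in> nth1 W k \<and> (if k < i then a \<le> k \<and> k \<le> b else a \<le> k + 1 \<and> k + 1 \<le> b)"
  then obtain k where k: "l \<in> nth1 W k" "(if k < i then a \<le> k \<and> k \<le> b else a \<le> k + 1 \<and> k + 1 \<le> b)" by blast
  assume "1 \<le> i" "i \<le> length W + 1" "1 \<le> a" "b \<le> length W + 1"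
  with k show "\<exists>k. a \<le> k \<and> k \<le> b \<and> l \<in> nth1 (ins1 W i {}) k"
    apply (cases "k < i")
    apply (rule exI[of _ k]; simp add: nth1_ins1)
    apply (rule exI[of _ "k+1"]; simp add: nth1_ins1)
    done
qed

lemma in_Un_range_del: "1 \<le> i \<Longrightarrow> i \<le> length W \<Longrightarrow> 1 \<le> a \<Longrightarrow>
  l \<in> Un_range (del1 (upd1 W i X) i) a b \<longleftrightarrow>
  (\<exists>k. l \<in> nth1 W k \<and> k \<noteq> i \<and> (if k < i then a \<le> k \<and> k \<le> b else a + 1 \<le> k \<and> k \<le> b + 1))"
  unfolding in_Un_range
proof
  assume "\<exists>k. a \<le> k \<and> k \<le> b \<and> l \<in> nth1 (del1 (upd1 W i X) i) k"
  then obtain k where k: "a \<le> k" "k \<le> b" "l \<in> nth1 (del1 (upd1 W i X) i) k" by blast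
  assume "1 \<le> i" "i \<le> length W" "1 \<le> a"
  with k show "\<exists>k. l \<in> nth1 W k \<and> k \<noteq> i \<and> (if k < i then a \<le> k \<and> k \<le> b else a + 1 \<le> k \<and> k \<le> b + 1)"
    apply (cases "k < i")
    apply (rule exI[of _ k]; simp add: nth1_del1 nth1_upd1)
    apply (rule exI[of _ "k+1"]; simp add: nth1_del1 nth1_upd1)
    done
next
  assume "\<exists>k. l \<in> nth1 W k \<and> k \<noteq> i \<and> (if k < i then a \<le> k \<and> k \<le> b else a + 1 \<le> k \<and> k \<le> b + 1)"
  then obtain k where k: "l \<in> nth1 W k" "k \<noteq> i" "(if k < i then a \<le> k \<and> k \<le> b else a + 1 \<le> k \<and> k \<le> b + 1)" by blast
  assume "1 \<le> i" "i \<le> length W" "1 \<le> a"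
  with k show "\<exists>k. a \<le> k \<and> k \<le> b \<and> l \<in> nth1 (del1 (upd1 W i X) i) k"
    apply (cases "k < i")
    apply (rule exI[of _ k]; simp add: nth1_del1 nth1_upd1)
    apply (rule exI[of _ "k-1"]; simp add: nth1_del1 nth1_upd1; linarith)
    done
qed

lemma a1: "(nth1 R i \<inter> nth1 W i = {}) \<longleftrightarrow> (\<forall>l. l \<in> nth1 R i \<longrightarrow> l \<notin> nth1 W i)" by blast
lemma a2: "(nth1 R i \<subseteq> Un_range W 1 (i - 1)) \<longleftrightarrow> (\<forall>l \<in> nth1 R i. \<exists>k. 1 \<le> k \<and> k \<le> i - 1 \<and> l \<in> nth1 W k)" unfolding subset_iff in_Un_range by blast
lemma a3: "(nth1 R i \<inter> Un_range W (i + 1) n = {}) \<longleftrightarrow> (\<forall>l \<in> nth1 R i. \<forall>k. i + 1 \<le> k \<and> k \<le> n \<longrightarrow> l \<notin> nth1 W k)" unfolding disjoint_iff in_Un_range by blast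
lemma a4: "(nth1 W i \<inter> Un_range R 1 (i - 1) = {}) \<longleftrightarrow> (\<forall>l \<in> nth1 W i. \<forall>k. 1 \<le> k \<and> k \<le> i - 1 \<longrightarrow> l \<notin> nth1 R k)" unfolding disjoint_iff in_Un_range by blast

lemma rc_iff: "rerun_consistent R W i \<longleftrightarrow>
  (\<forall>l. l \<in> nth1 R i \<longrightarrow> l \<notin> nth1 W i) \<and>
  (\<forall>l \<in> nth1 R i. \<exists>k. 1 \<le> k \<and> k \<le> i - 1 \<and> l \<in> nth1 W k) \<and>
  (\<forall>l \<in> nth1 R i. \<forall>k. i + 1 \<le> k \<and> k \<le> length W \<longrightarrow> l \<notin> nth1 W k) \<and>
  (\<forall>l \<in> nth1 W i. \<forall>k. 1 \<le> k \<and> k \<le> i - 1 \<longrightarrow> l \<notin> nth1 R k)"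
  unfolding rerun_consistent_def Let_def a1 a2 a3 a4 by (rule refl)



lemma wf_iff: "well_formed ieval (C,Out,\<Sigma>) (T,R,W) \<longleftrightarrow>
  length Out = length C \<and> length T = length C \<and> length R = length C \<and> length W = length C \<and>
  (\<forall>i. 1 \<le> i \<and> i \<le> length C \<and> nth1 T i = Clean \<longrightarrow>
     (\<exists>\<Sigma>'. ieval (nth1 C i) \<Sigma> (nth1 Out i) \<Sigma>' (nth1 R i) (nth1 W i) \<and>
        (\<forall>l. l \<notin> Un_range W (i + 1) (length C) \<longrightarrow> \<Sigma> l = \<Sigma>' l) \<and>
        rerun_consistent R W i))"
  by (simp add: well_formed_def Let_def)

lemma ie_frame: "instrumented_eval eval ieval \<Longrightarrow> ieval c s out s' r w \<Longrightarrow> l \<notin> w \<Longrightarrow> s' l = s l"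
  unfolding instrumented_eval_def
  apply (drule conjunct1[OF conjunct2])
  apply (drule spec[of _ c], drule spec[of _ s], drule spec[of _ out], drule spec[of _ s'], drule spec[of _ r], drule spec[of _ w])
  by simp

lemma ie_reuse: "instrumented_eval eval ieval \<Longrightarrow> ieval c s1 out s1' r w \<Longrightarrow> (\<And>l. l \<in> r \<Longrightarrow> s2 l = s1 l) \<Longrightarrow>
   ieval c s2 out (\<lambda>l. if l \<in> w then s1' l else s2 l) r w"
  unfolding instrumented_eval_def
  apply (drule conjunct2[OF conjunct2])
  apply (drule spec[of _ c], drule spec[of _ s1], drule spec[of _ out], drule spec[of _ s1'], drule spec[of _ r], drule spec[of _ w], drule spec[of _ s2])
  by simp

lemma bs_intro:
  assumes "j < i" "l \<in> nth1 W i" "l \<notin> nth1 W' i" "l \<in> nth1 W j" "1 \<le> j"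
    and "\<And>k. j < k \<Longrightarrow> k < i \<Longrightarrow> l \<notin> nth1 W k"
  shows "backward_stale W W' i j"
proof -
  have "last_writer W i l = j" unfolding last_writer_def
  proof (rule Max_eqI)
    show "finite {k. 1 \<le> k \<and> k < i \<and> l \<in> nth1 W k}" by (rule finite_subset[of _ "{..<i}"]) auto
  next
    fix y assume "y \<in> {k. 1 \<le> k \<and> k < i \<and> l \<in> nth1 W k}"
    then show "y \<le> j" using assms(6) by (metis (mono_tags, lifting) mem_Collect_eq not_le)
  next
    show "j \<in> {k. 1 \<le> k \<and> k < i \<and> l \<in> nth1 W k}" using assms by auto
  qed
  then show ?thesis unfolding backward_stale_def using assms by blast
qed


lemma nth1_ins_map: "1 \<le> i \<Longrightarrow> i \<le> length xs + 1 \<Longrightarrow> 1 \<le> j' \<Longrightarrow> j' \<le> length xs + 1 \<Longrightarrow> j' \<noteq> i \<Longrightarrow>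
  nth1 (ins1 xs i v) j' = nth1 xs (if j' < i then j' else j' - 1)"
  by (simp add: nth1_ins1)

lemma nm_gen: "1 \<le> i \<Longrightarrow> i \<le> n + 1 \<Longrightarrow> 1 \<le> j' \<Longrightarrow> j' \<le> n + 1 \<Longrightarrow> j' \<noteq> i \<Longrightarrow> length X = n \<Longrightarrow>
  nth1 (ins1 X i v) j' = nth1 X (if j' < i then j' else j' - 1)"
  by (simp add: nth1_ins1)

lemma Un_range_ins_pre:
  assumes "1 \<le> i" "i \<le> length W + 1" "1 \<le> j'" "j' \<le> length W + 1" "j' \<noteq> i"
  shows "Un_range (ins1 W i {}) 1 (j' - 1) = Un_range W 1 ((if j' < i then j' else j' - 1) - 1)"
proof (rule set_eqI)
  fix l
  have "l \<in> Un_range (ins1 W i {}) 1 (j' - 1) \<longleftrightarrow>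
     (\<exists>k. l \<in> nth1 W k \<and> (if k < i then 1 \<le> k \<and> k \<le> j' - 1 else 1 \<le> k + 1 \<and> k + 1 \<le> j' - 1))"
    by (rule in_Un_range_ins) (use assms in auto)
  also have "\<dots> \<longleftrightarrow> (\<exists>k. 1 \<le> k \<and> k \<le> (if j' < i then j' else j' - 1) - 1 \<and> l \<in> nth1 W k)"
    by (rule ex_cong1) (use assms in auto)
  also have "\<dots> \<longleftrightarrow> l \<in> Un_range W 1 ((if j' < i then j' else j' - 1) - 1)"
    by (rule in_Un_range[symmetric])
  finally show "l \<in> Un_range (ins1 W i {}) 1 (j' - 1) \<longleftrightarrow> l \<in> Un_range W 1 ((if j' < i then j' else j' - 1) - 1)" .
qed

lemma Un_range_ins_post:
  assumes "1 \<le> i" "i \<le> length W + 1" "1 \<le> j'" "j' \<le> length W + 1" "j' \<noteq> i"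
  shows "Un_range (ins1 W i {}) (j' + 1) (length W + 1) = Un_range W ((if j' < i then j' else j' - 1) + 1) (length W)"
proof (rule set_eqI)
  fix l
  have "l \<in> Un_range (ins1 W i {}) (j' + 1) (length W + 1) \<longleftrightarrow>
     (\<exists>k. l \<in> nth1 W k \<and> (if k < i then j' + 1 \<le> k \<and> k \<le> length W + 1 else j' + 1 \<le> k + 1 \<and> k + 1 \<le> length W + 1))"
    by (rule in_Un_range_ins) (use assms in auto)
  also have "\<dots> \<longleftrightarrow> (\<exists>k. (if j' < i then j' else j' - 1) + 1 \<le> k \<and> k \<le> length W \<and> l \<in> nth1 W k)"
    by (rule ex_cong1) (use assms in auto)
  also have "\<dots> \<longleftrightarrow> l \<in> Un_range W ((if j' < i then j' else j' - 1) + 1) (length W)"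
    by (rule in_Un_range[symmetric])
  finally show "l \<in> Un_range (ins1 W i {}) (j' + 1) (length W + 1) \<longleftrightarrow> l \<in> Un_range W ((if j' < i then j' else j' - 1) + 1) (length W)" .
qed


lemma wf_insert:
  assumes wf: "well_formed ieval (C,Out,\<Sigma>) (T,R,W)"
    and i: "1 \<le> i" "i \<le> length C + 1"
  shows "well_formed ieval (ins1 C i c, ins1 Out i b0, \<Sigma>) (ins1 T i Stale, ins1 R i {}, ins1 W i {})"
proof -
  from wf have len: "length Out = length C" "length T = length C" "length R = length C" "length W = length C"
    and cl: "\<And>j. 1 \<le> j \<Longrightarrow> j \<le> length C \<Longrightarrow> nth1 T j = Clean \<Longrightarrow>
     (\<exists>\<Sigma>j. ieval (nth1 C j) \<Sigma> (nth1 Out j) \<Sigma>j (nth1 R j) (nth1 W j) \<and>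
        (\<forall>l. l \<notin> Un_range W (j + 1) (length C) \<longrightarrow> \<Sigma> l = \<Sigma>j l) \<and>
        rerun_consistent R W j)"
    by (auto simp: wf_iff)
  let ?n = "length C"
  show ?thesis unfolding wf_iff
  proof (intro conjI allI impI)
    show "length (ins1 Out i b0) = length (ins1 C i c)" "length (ins1 T i Stale) = length (ins1 C i c)"
      "length (ins1 R i {}) = length (ins1 C i c)" "length (ins1 W i {}) = length (ins1 C i c)"
      using len by simp_all
  next
    fix j' assume j: "1 \<le> j' \<and> j' \<le> length (ins1 C i c) \<and> nth1 (ins1 T i Stale) j' = Clean"
    then have j1: "1 \<le> j'" and j2: "j' \<le> ?n + 1" and j3: "nth1 (ins1 T i Stale) j' = Clean" by auto
    have ji: "j' \<noteq> i"
    proof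
      assume "j' = i" then show False using j3 i len by (simp add: nth1_ins1)
    qed
    define j where "j = (if j' < i then j' else j' - 1)"
    have jb: "1 \<le> j" "j \<le> ?n" using j1 j2 ji i unfolding j_def by auto
    note nm = nm_gen[OF i(1) i(2) j1 j2 ji, folded j_def]
    have Tj: "nth1 T j = Clean" using j3 nm[of T, OF len(2)] by simp
    obtain \<Sigma>j where evj: "ieval (nth1 C j) \<Sigma> (nth1 Out j) \<Sigma>j (nth1 R j) (nth1 W j)"
        and agj: "\<forall>l. l \<notin> Un_range W (j + 1) ?n \<longrightarrow> \<Sigma> l = \<Sigma>j l"
        and rcj: "rerun_consistent R W j" using cl[OF jb Tj] by blast
    have postW: "Un_range (ins1 W i {}) (j' + 1) (?n + 1) = Un_range W (j + 1) ?n"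
      using Un_range_ins_post[of i W j'] i j1 j2 ji len unfolding j_def by simp
    have preW: "Un_range (ins1 W i {}) 1 (j' - 1) = Un_range W 1 (j - 1)"
      using Un_range_ins_pre[of i W j'] i j1 j2 ji len unfolding j_def by simp
    have preR: "Un_range (ins1 R i {}) 1 (j' - 1) = Un_range R 1 (j - 1)"
      using Un_range_ins_pre[of i R j'] i j1 j2 ji len unfolding j_def by simp
    have lC: "length (ins1 C i c) = ?n + 1" by simp
    have lW: "length (ins1 W i {}) = ?n + 1" using len by simp
    have rc': "rerun_consistent (ins1 R i {}) (ins1 W i {}) j'"
      using rcj unfolding rerun_consistent_def Let_def lW postW preW preR
        nm[of R, OF len(3)] nm[of W, OF len(4)] len(4) .
    show "\<exists>\<Sigma>'. ieval (nth1 (ins1 C i c) j') \<Sigma> (nth1 (ins1 Out i b0) j') \<Sigma>' (nth1 (ins1 R i {}) j') (nth1 (ins1 W i {}) j') \<and>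
          (\<forall>l. l \<notin> Un_range (ins1 W i {}) (j' + 1) (length (ins1 C i c)) \<longrightarrow> \<Sigma> l = \<Sigma>' l) \<and>
          rerun_consistent (ins1 R i {}) (ins1 W i {}) j'"
      unfolding lC postW nm[of C, OF refl] nm[of Out, OF len(1)] nm[of R, OF len(3)] nm[of W, OF len(4)]
      using evj agj rc' by blast
  qed
qed

lemma wf_edit:
  assumes wf: "well_formed ieval (C,Out,\<Sigma>) (T,R,W)"
    and i: "1 \<le> i" "i \<le> length C"
  shows "well_formed ieval (upd1 C i c, Out, \<Sigma>) (upd1 T i Stale, R, W)"
proof -
  from wf have len: "length Out = length C" "length T = length C" "length R = length C" "length W = length C"
    and cl: "\<And>j. 1 \<le> j \<Longrightarrow> j \<le> length C \<Longrightarrow> nth1 T j = Clean \<Longrightarrow>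
     (\<exists>\<Sigma>j. ieval (nth1 C j) \<Sigma> (nth1 Out j) \<Sigma>j (nth1 R j) (nth1 W j) \<and>
        (\<forall>l. l \<notin> Un_range W (j + 1) (length C) \<longrightarrow> \<Sigma> l = \<Sigma>j l) \<and>
        rerun_consistent R W j)"
    by (auto simp: wf_iff)
  show ?thesis unfolding wf_iff
  proof (intro conjI allI impI)
    show "length Out = length (upd1 C i c)" "length (upd1 T i Stale) = length (upd1 C i c)"
      "length R = length (upd1 C i c)" "length W = length (upd1 C i c)" using len by simp_all
  next
    fix j assume j: "1 \<le> j \<and> j \<le> length (upd1 C i c) \<and> nth1 (upd1 T i Stale) j = Clean"
    then have j1: "1 \<le> j" and j2: "j \<le> length C" and j3: "nth1 (upd1 T i Stale) j = Clean" by auto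
    have ji: "j \<noteq> i" using j3 i len j1 by (auto simp: nth1_upd1)
    have Tj: "nth1 T j = Clean" using j3 ji i len j1 by (simp add: nth1_upd1)
    have Cj: "nth1 (upd1 C i c) j = nth1 C j" using ji i j1 by (simp add: nth1_upd1)
    show "\<exists>\<Sigma>'. ieval (nth1 (upd1 C i c) j) \<Sigma> (nth1 Out j) \<Sigma>' (nth1 R j) (nth1 W j) \<and>
          (\<forall>l. l \<notin> Un_range W (j + 1) (length (upd1 C i c)) \<longrightarrow> \<Sigma> l = \<Sigma>' l) \<and>
          rerun_consistent R W j"
      unfolding Cj len_upd1 using cl[OF j1 j2 Tj] .
  qed
qed


lemma nth1_delu: "1 \<le> i \<Longrightarrow> i \<le> length xs \<Longrightarrow> 1 \<le> k \<Longrightarrow>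
  nth1 (del1 (upd1 xs i X) i) k = nth1 xs (if k < i then k else k + 1)"
  by (simp add: nth1_del1 nth1_upd1)

lemma nd_gen: "1 \<le> i \<Longrightarrow> i \<le> length X \<Longrightarrow> 1 \<le> j' \<Longrightarrow>
  nth1 (del1 X i) j' = nth1 X (if j' < i then j' else j' + 1)"
  by (simp add: nth1_del1)

lemma wf_delete:
  assumes ie: "instrumented_eval eval ieval"
    and wf: "well_formed ieval (C,Out,\<Sigma>) (T,R,W)"
    and i: "1 \<le> i" "i \<le> length C"
    and R'': "R'' = upd1 R i {}" and W'': "W'' = upd1 W i {}"
    and T'': "T'' = retag T R W W'' i"
  shows "well_formed ieval (del1 C i, del1 Out i, \<Sigma>) (del1 T'' i, del1 R'' i, del1 W'' i)"
proof -
  from wf have len: "length Out = length C" "length T = length C" "length R = length C" "length W = length C"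
    and cl: "\<And>j. 1 \<le> j \<Longrightarrow> j \<le> length C \<Longrightarrow> nth1 T j = Clean \<Longrightarrow>
     (\<exists>\<Sigma>j. ieval (nth1 C j) \<Sigma> (nth1 Out j) \<Sigma>j (nth1 R j) (nth1 W j) \<and>
        (\<forall>l. l \<notin> Un_range W (j + 1) (length C) \<longrightarrow> \<Sigma> l = \<Sigma>j l) \<and>
        rerun_consistent R W j)"
    by (auto simp: wf_iff)
  let ?n = "length C"
  have lT'': "length T'' = ?n" using len by (simp add: T'')
  have W''i: "nth1 W'' i = {}" using i len by (simp add: W'' nth1_upd1)
  show ?thesis unfolding wf_iff
  proof (intro conjI allI impI)
    show "length (del1 Out i) = length (del1 C i)" "length (del1 T'' i) = length (del1 C i)"
      "length (del1 R'' i) = length (del1 C i)" "length (del1 W'' i) = length (del1 C i)"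
      using len i lT'' by (simp_all add: R'' W'')
  next
    fix j' assume j: "1 \<le> j' \<and> j' \<le> length (del1 C i) \<and> nth1 (del1 T'' i) j' = Clean"
    then have j1: "1 \<le> j'" and j2: "j' \<le> ?n - 1" and j3: "nth1 (del1 T'' i) j' = Clean" using i by auto
    define jj where "jj = (if j' < i then j' else j' + 1)"
    have jb: "1 \<le> jj" "jj \<le> ?n" "jj \<noteq> i" using j1 j2 i unfolding jj_def by auto
    note nd = nd_gen[OF i(1) _ j1, folded jj_def]
    have Tjj: "nth1 T'' jj = (if forward_stale R W W'' i jj \<or> backward_stale W W'' i jj then Stale else nth1 T jj)"
      using nth1_retag[of jj T R W W'' i] jb len by (simp add: T'')
    have "nth1 T'' jj = Clean" using j3 nth1_del1[of i T'' j'] i j1 lT'' unfolding jj_def by (auto split: if_splits)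
    with Tjj have nfs: "\<not> forward_stale R W W'' i jj" and nbs: "\<not> backward_stale W W'' i jj"
      and Tc: "nth1 T jj = Clean" by (auto split: if_splits)
    have nfs': "jj > i \<Longrightarrow> nth1 W i \<inter> (nth1 R jj \<union> nth1 W jj) = {}"
      using nfs W''i unfolding forward_stale_def by auto
    obtain \<Sigma>j where evj: "ieval (nth1 C jj) \<Sigma> (nth1 Out jj) \<Sigma>j (nth1 R jj) (nth1 W jj)"
        and agj: "\<And>l. l \<notin> Un_range W (jj + 1) ?n \<Longrightarrow> \<Sigma> l = \<Sigma>j l"
        and rcj: "rerun_consistent R W jj" using cl[OF jb(1,2) Tc] by blast
    have dR: "nth1 (del1 R'' i) k = nth1 R (if k < i then k else k + 1)" if "1 \<le> k" for k
      using nth1_delu[of i R k "{}"] i len that by (simp add: R'')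
    have dW: "nth1 (del1 W'' i) k = nth1 W (if k < i then k else k + 1)" if "1 \<le> k" for k
      using nth1_delu[of i W k "{}"] i len that by (simp add: W'')
    have dRj: "nth1 (del1 R'' i) j' = nth1 R jj" using dR[OF j1] unfolding jj_def .
    have dWj: "nth1 (del1 W'' i) j' = nth1 W jj" using dW[OF j1] unfolding jj_def .
    have lD: "length (del1 C i) = ?n - 1" using i by simp
    have lWd: "length (del1 W'' i) = ?n - 1" using i len by (simp add: W'')
    have ag: "\<Sigma> l = \<Sigma>j l" if l: "l \<notin> Un_range (del1 W'' i) (j' + 1) (?n - 1)" for l
    proof (cases "l \<in> nth1 W jj")
      case False
      then show ?thesis using ie_frame[of eval ieval "nth1 C jj" \<Sigma> "nth1 Out jj" \<Sigma>j "nth1 R jj" "nth1 W jj" l] ie evj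
        by simp
    next
      case lW: True
      have nk: "\<not> (if k < i then j' + 1 \<le> k \<and> k \<le> ?n - 1 else j' + 1 + 1 \<le> k \<and> k \<le> ?n - 1 + 1)"
        if "l \<in> nth1 W k" "k \<noteq> i" for k
      proof
        assume h: "(if k < i then j' + 1 \<le> k \<and> k \<le> ?n - 1 else j' + 1 + 1 \<le> k \<and> k \<le> ?n - 1 + 1)"
        have "l \<in> Un_range (del1 W'' i) (j' + 1) (?n - 1) \<longleftrightarrow>
          (\<exists>k. l \<in> nth1 W k \<and> k \<noteq> i \<and> (if k < i then j' + 1 \<le> k \<and> k \<le> ?n - 1 else j' + 1 + 1 \<le> k \<and> k \<le> ?n - 1 + 1))"
          unfolding W'' by (rule in_Un_range_del) (use i len in auto)
        then show False using l that h by blast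
      qed
      have "l \<notin> Un_range W (jj + 1) ?n"
      proof
        assume "l \<in> Un_range W (jj + 1) ?n"
        then obtain k where k: "jj + 1 \<le> k" "k \<le> ?n" "l \<in> nth1 W k" unfolding in_Un_range by blast
        show False
        proof (cases "k = i")
          case False
          then show False using nk[OF k(3) False] k i j1 j2 unfolding jj_def by (auto split: if_splits)
        next
          case True
          then have jji: "jj < i" "jj = j'" using k jb unfolding jj_def by (auto split: if_splits)
          have "backward_stale W W'' i jj"
          proof (rule bs_intro[of jj i l])
            fix k' assume "jj < k'" "k' < i"
            then show "l \<notin> nth1 W k'" using nk[of k'] jji i by auto
          qed (use jji k True W''i lW jb in auto)
          then show False using nbs by simp
        qed
      qed
      then show ?thesis by (rule agj)
    qed
    have lenW: "length W = ?n" using len by simp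
    note rcjx = rcj[unfolded rc_iff lenW]
    have o1: "\<And>l. l \<in> nth1 R jj \<Longrightarrow> l \<notin> nth1 W jj" using conjunct1[OF rcjx] by blast
    have o2: "\<And>l. l \<in> nth1 R jj \<Longrightarrow> \<exists>k. 1 \<le> k \<and> k \<le> jj - 1 \<and> l \<in> nth1 W k"
      using conjunct1[OF conjunct2[OF rcjx]] by blast
    have o3: "\<And>l k. l \<in> nth1 R jj \<Longrightarrow> jj + 1 \<le> k \<Longrightarrow> k \<le> ?n \<Longrightarrow> l \<notin> nth1 W k"
      using conjunct1[OF conjunct2[OF conjunct2[OF rcjx]]] by blast
    have o4: "\<And>l k. l \<in> nth1 W jj \<Longrightarrow> 1 \<le> k \<Longrightarrow> k \<le> jj - 1 \<Longrightarrow> l \<notin> nth1 R k"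
      using conjunct2[OF conjunct2[OF conjunct2[OF rcjx]]] by blast
    have c2: "\<exists>k. 1 \<le> k \<and> k \<le> j' - 1 \<and> l \<in> nth1 (del1 W'' i) k" if lr: "l \<in> nth1 R jj" for l
    proof -
      obtain k where k: "1 \<le> k" "k \<le> jj - 1" "l \<in> nth1 W k" using o2[OF lr] by blast
      have ki: "k \<noteq> i"
      proof
        assume "k = i"
        then have "jj > i" using k jb by linarith
        then show False using nfs' k \<open>k = i\<close> lr by blast
      qed
      define k' where "k' = (if k < i then k else k - 1)"
      have k'b: "1 \<le> k'" "k' \<le> j' - 1" using k ki i j1 unfolding k'_def jj_def by (auto split: if_splits)
      have "(if k' < i then k' else k' + 1) = k" using ki k i unfolding k'_def by auto
      then have "nth1 (del1 W'' i) k' = nth1 W k" using dW[OF k'b(1)] by simp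
      then show ?thesis using k'b k(3) by blast
    qed
    have c3: "l \<notin> nth1 (del1 W'' i) k" if "l \<in> nth1 R jj" "j' + 1 \<le> k" "k \<le> ?n - 1" for l k
    proof -
      have "1 \<le> k" using that j1 by linarith
      moreover have "jj + 1 \<le> (if k < i then k else k + 1)" "(if k < i then k else k + 1) \<le> ?n"
        using that j1 i unfolding jj_def by auto
      ultimately show ?thesis using dW o3[OF that(1)] by simp
    qed
    have c4: "l \<notin> nth1 (del1 R'' i) k" if "l \<in> nth1 W jj" "1 \<le> k" "k \<le> j' - 1" for l k
    proof -
      have "1 \<le> (if k < i then k else k + 1)" "(if k < i then k else k + 1) \<le> jj - 1"
        using that j1 i unfolding jj_def by auto
      then show ?thesis using dR[OF that(2)] o4[OF that(1)] by simp
    qed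
    have rc': "rerun_consistent (del1 R'' i) (del1 W'' i) j'"
      unfolding rc_iff lWd dRj dWj
    proof (intro conjI)
      show "\<forall>l. l \<in> nth1 R jj \<longrightarrow> l \<notin> nth1 W jj" using o1 by blast
      show "\<forall>l\<in>nth1 R jj. \<exists>k\<ge>1. k \<le> j' - 1 \<and> l \<in> nth1 (del1 W'' i) k" using c2 by blast
      show "\<forall>l\<in>nth1 R jj. \<forall>k. j' + 1 \<le> k \<and> k \<le> ?n - 1 \<longrightarrow> l \<notin> nth1 (del1 W'' i) k" using c3 by blast
      show "\<forall>l\<in>nth1 W jj. \<forall>k. 1 \<le> k \<and> k \<le> j' - 1 \<longrightarrow> l \<notin> nth1 (del1 R'' i) k" using c4 by blast
    qed
    show "\<exists>\<Sigma>'. ieval (nth1 (del1 C i) j') \<Sigma> (nth1 (del1 Out i) j') \<Sigma>' (nth1 (del1 R'' i) j') (nth1 (del1 W'' i) j') \<and>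
          (\<forall>l. l \<notin> Un_range (del1 W'' i) (j' + 1) (length (del1 C i)) \<longrightarrow> \<Sigma> l = \<Sigma>' l) \<and>
          rerun_consistent (del1 R'' i) (del1 W'' i) j'"
      unfolding lD dRj dWj nd[OF i(2)] nd[OF i(2)[folded len(1)]]
      using evj ag rc' by blast
  qed
qed


lemma wf_run:
  assumes ie: "instrumented_eval eval ieval"
    and wf: "well_formed ieval (C,Out,\<Sigma>) (T,R,W)"
    and i: "1 \<le> i" "i \<le> length C"
    and ev: "ieval (nth1 C i) \<Sigma> out \<Sigma>' r w"
    and R': "R' = upd1 R i r" and W': "W' = upd1 W i w"
    and rc: "rerun_consistent R' W' i"
    and T': "T' = upd1 (retag T R W W' i) i Clean"
  shows "well_formed ieval (C, upd1 Out i out, \<Sigma>') (T', R', W')"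
proof -
  from wf have len: "length Out = length C" "length T = length C" "length R = length C" "length W = length C"
    and cl: "\<And>j. 1 \<le> j \<Longrightarrow> j \<le> length C \<Longrightarrow> nth1 T j = Clean \<Longrightarrow>
     (\<exists>\<Sigma>j. ieval (nth1 C j) \<Sigma> (nth1 Out j) \<Sigma>j (nth1 R j) (nth1 W j) \<and>
        (\<forall>l. l \<notin> Un_range W (j + 1) (length C) \<longrightarrow> \<Sigma> l = \<Sigma>j l) \<and>
        rerun_consistent R W j)"
    by (auto simp: wf_iff)
  let ?n = "length C"
  have Ri: "nth1 R' i = r" and Wi: "nth1 W' i = w" using i len by (simp_all add: R' W' nth1_upd1)
  have Rj: "nth1 R' j = nth1 R j" and Wj: "nth1 W' j = nth1 W j" if "j \<noteq> i" "1 \<le> j" for j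
    using i len that by (simp_all add: R' W' nth1_upd1)
  have lenW': "length W' = ?n" using len by (simp add: W')
  from rc[unfolded rc_iff Ri Wi lenW']
  have rcx: "(\<forall>l. l \<in> r \<longrightarrow> l \<notin> w) \<and>
    (\<forall>l\<in>r. \<forall>k. i + 1 \<le> k \<and> k \<le> ?n \<longrightarrow> l \<notin> nth1 W' k) \<and>
    (\<forall>l\<in>w. \<forall>k. 1 \<le> k \<and> k \<le> i - 1 \<longrightarrow> l \<notin> nth1 R' k)" by blast
  have rc1: "\<And>l. l \<in> r \<Longrightarrow> l \<notin> w" using rcx by blast
  have rc3: "l \<notin> nth1 W k" if "l \<in> r" "i + 1 \<le> k" "k \<le> ?n" for l k
  proof -
    have "l \<notin> nth1 W' k" using rcx that by blast
    moreover have "nth1 W' k = nth1 W k" using Wj[of k] that by simp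
    ultimately show ?thesis by simp
  qed
  have rc4: "l \<notin> nth1 R k" if "l \<in> w" "1 \<le> k" "k \<le> i - 1" for l k
  proof -
    have "l \<notin> nth1 R' k" using rcx that by blast
    moreover have "nth1 R' k = nth1 R k" using Rj[of k] that i by simp
    ultimately show ?thesis by simp
  qed
  have fr: "\<Sigma>' l = \<Sigma> l" if "l \<notin> w" for l using ie_frame[of eval ieval "nth1 C i" \<Sigma> out \<Sigma>' r w l] ie ev that by blast
  show ?thesis
    unfolding wf_iff
  proof (intro conjI allI impI)
    show "length (upd1 Out i out) = ?n" "length T' = ?n" "length R' = ?n" "length W' = ?n"
      using len by (simp_all add: T' R' W')
  next
    fix j assume j: "1 \<le> j \<and> j \<le> ?n \<and> nth1 T' j = Clean"
    then have j1: "1 \<le> j" and j2: "j \<le> ?n" and j3: "nth1 T' j = Clean" by auto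
    show "\<exists>\<Sigma>j. ieval (nth1 C j) \<Sigma>' (nth1 (upd1 Out i out) j) \<Sigma>j (nth1 R' j) (nth1 W' j) \<and>
        (\<forall>l. l \<notin> Un_range W' (j + 1) ?n \<longrightarrow> \<Sigma>' l = \<Sigma>j l) \<and> rerun_consistent R' W' j"
    proof (cases "j = i")
      case True
      have "ieval (nth1 C i) \<Sigma>' out (\<lambda>l. if l \<in> w then \<Sigma>' l else \<Sigma>' l) r w"
        using ie_reuse[of eval ieval "nth1 C i" \<Sigma> out \<Sigma>' r w \<Sigma>'] ie ev fr rc1 by simp
      then show ?thesis using True rc i len by (intro exI[of _ \<Sigma>']) (simp add: Ri Wi nth1_upd1)
    next
      case False
      have Tj: "nth1 T' j = (if forward_stale R W W' i j \<or> backward_stale W W' i j then Stale else nth1 T j)"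
        using False i j1 j2 len by (simp add: T' nth1_upd1 nth1_retag)
      with j3 have nfs: "\<not> forward_stale R W W' i j" and nbs: "\<not> backward_stale W W' i j"
        and Tc: "nth1 T j = Clean" by (auto split: if_splits)
      obtain \<Sigma>j where evj: "ieval (nth1 C j) \<Sigma> (nth1 Out j) \<Sigma>j (nth1 R j) (nth1 W j)"
        and agj: "\<And>l. l \<notin> Un_range W (j + 1) ?n \<Longrightarrow> \<Sigma> l = \<Sigma>j l"
        and rcj: "rerun_consistent R W j" using cl[of j] j Tc by blast
      have Oj: "nth1 (upd1 Out i out) j = nth1 Out j" using False i j len by (simp add: nth1_upd1)
      have nfs': "j > i \<Longrightarrow> (nth1 W i \<union> w) \<inter> (nth1 R j \<union> nth1 W j) = {}"
        using nfs Wi unfolding forward_stale_def by auto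
      have rdis: "l \<notin> w" if "l \<in> nth1 R j" for l
      proof (cases "j > i")
        case True then show ?thesis using nfs' that by blast
      next
        case False then have "j \<le> i - 1" using \<open>j \<noteq> i\<close> by linarith
        then show ?thesis using rc4[of l j] j1 that by blast
      qed
      define \<Sigma>j' where "\<Sigma>j' = (\<lambda>l. if l \<in> nth1 W j then \<Sigma>j l else \<Sigma>' l)"
      have evj': "ieval (nth1 C j) \<Sigma>' (nth1 Out j) \<Sigma>j' (nth1 R j) (nth1 W j)"
        unfolding \<Sigma>j'_def
        using ie_reuse[of eval ieval "nth1 C j" \<Sigma> "nth1 Out j" \<Sigma>j "nth1 R j" "nth1 W j" \<Sigma>'] ie evj fr rdis
        by simp
      have ag: "\<Sigma>' l = \<Sigma>j' l" if l: "l \<notin> Un_range W' (j + 1) ?n" for l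
      proof (cases "l \<in> nth1 W j")
        case False then show ?thesis by (simp add: \<Sigma>j'_def)
      next
        case lW: True
        have lk: "l \<notin> nth1 W' k" if "j + 1 \<le> k" "k \<le> ?n" for k
          using l that unfolding in_Un_range by blast
        show ?thesis
        proof (cases "j > i")
          case True
          have "l \<notin> Un_range W (j + 1) ?n"
          proof
            assume "l \<in> Un_range W (j + 1) ?n"
            then obtain k where "j + 1 \<le> k" "k \<le> ?n" "l \<in> nth1 W k" unfolding in_Un_range by blast
            then show False using lk[of k] Wj[of k] True by simp
          qed
          then have "\<Sigma> l = \<Sigma>j l" by (rule agj)
          moreover have "l \<notin> w" using nfs' True lW by blast
          ultimately show ?thesis using fr lW by (simp add: \<Sigma>j'_def)
        next
          case False
          then have ji: "j < i" using \<open>j \<noteq> i\<close> by linarith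
          have lw: "l \<notin> w" using lk[of i] ji i Wi by simp
          have lWi: "l \<notin> nth1 W i"
          proof
            assume "l \<in> nth1 W i"
            have "backward_stale W W' i j"
            proof (rule bs_intro[of j i l])
              fix k assume "j < k" "k < i"
              then show "l \<notin> nth1 W k" using lk[of k] Wj[of k] i by simp
            qed (use ji \<open>l \<in> nth1 W i\<close> lw Wi lW j1 in auto)
            then show False using nbs by simp
          qed
          have "l \<notin> Un_range W (j + 1) ?n"
          proof
            assume "l \<in> Un_range W (j + 1) ?n"
            then obtain k where "j + 1 \<le> k" "k \<le> ?n" "l \<in> nth1 W k" unfolding in_Un_range by blast
            then show False using lk[of k] Wj[of k] lWi by (cases "k = i") auto
          qed
          then have "\<Sigma> l = \<Sigma>j l" by (rule agj)
          then show ?thesis using fr[OF lw] lW by (simp add: \<Sigma>j'_def)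
        qed
      qed
      have rcj': "rerun_consistent R' W' j"
      proof -
        have lenW: "length W = ?n" using len by simp
        note rcjx = rcj[unfolded rc_iff lenW]
        have o1: "\<And>l. l \<in> nth1 R j \<Longrightarrow> l \<notin> nth1 W j" using conjunct1[OF rcjx] by blast
        have o2: "\<And>l. l \<in> nth1 R j \<Longrightarrow> \<exists>k. 1 \<le> k \<and> k \<le> j - 1 \<and> l \<in> nth1 W k"
          using conjunct1[OF conjunct2[OF rcjx]] by blast
        have o3: "\<And>l k. l \<in> nth1 R j \<Longrightarrow> j + 1 \<le> k \<Longrightarrow> k \<le> ?n \<Longrightarrow> l \<notin> nth1 W k"
          using conjunct1[OF conjunct2[OF conjunct2[OF rcjx]]] by blast
        have o4: "\<And>l k. l \<in> nth1 W j \<Longrightarrow> 1 \<le> k \<Longrightarrow> k \<le> j - 1 \<Longrightarrow> l \<notin> nth1 R k"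
          using conjunct2[OF conjunct2[OF conjunct2[OF rcjx]]] by blast
        have c2: "\<exists>k. 1 \<le> k \<and> k \<le> j - 1 \<and> l \<in> nth1 W' k" if lr: "l \<in> nth1 R j" for l
        proof -
          obtain k where k: "1 \<le> k" "k \<le> j - 1" "l \<in> nth1 W k" using o2[OF lr] by blast
          have "k \<noteq> i"
          proof
            assume "k = i"
            then have "j > i" using k j1 by linarith
            then show False using nfs' k \<open>k = i\<close> lr by blast
          qed
          then show ?thesis using k Wj[of k] by auto
        qed
        have c3: "l \<notin> nth1 W' k" if "l \<in> nth1 R j" "j + 1 \<le> k" "k \<le> ?n" for l k
        proof (cases "k = i")
          case True
          then show ?thesis using rdis[OF that(1)] Wi by simp
        next
          case False
          then show ?thesis using o3[OF that] that Wj[of k] by simp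
        qed
        have c4: "l \<notin> nth1 R' k" if "l \<in> nth1 W j" "1 \<le> k" "k \<le> j - 1" for l k
        proof (cases "k = i")
          case True
          then have "j > i" using that by linarith
          show ?thesis
          proof
            assume "l \<in> nth1 R' k"
            then have "l \<in> r" using True Ri by simp
            then show False using rc3[of l j] \<open>j > i\<close> j2 that(1) by simp
          qed
        next
          case False
          then show ?thesis using o4[OF that] that Rj[of k] by simp
        qed
        show ?thesis unfolding rc_iff lenW' Rj[OF \<open>j \<noteq> i\<close> j1] Wj[OF \<open>j \<noteq> i\<close> j1]
        proof (intro conjI)
          show "\<forall>l. l \<in> nth1 R j \<longrightarrow> l \<notin> nth1 W j" using o1 by blast
          show "\<forall>l\<in>nth1 R j. \<exists>k\<ge>1. k \<le> j - 1 \<and> l \<in> nth1 W' k" using c2 by blast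
          show "\<forall>l\<in>nth1 R j. \<forall>k. j + 1 \<le> k \<and> k \<le> ?n \<longrightarrow> l \<notin> nth1 W' k" using c3 by blast
          show "\<forall>l\<in>nth1 W j. \<forall>k. 1 \<le> k \<and> k \<le> j - 1 \<longrightarrow> l \<notin> nth1 R' k" using c4 by blast
        qed
      qed
      show ?thesis
        using evj' ag rcj' Oj Rj[OF \<open>j \<noteq> i\<close> j1] Wj[OF \<open>j \<noteq> i\<close> j1] by auto
    qed
  qed
qed


theorem theorem1:
  fixes eval :: "'c \<Rightarrow> ('l \<Rightarrow> 'v) \<Rightarrow> 'o \<Rightarrow> ('l \<Rightarrow> 'v) \<Rightarrow> bool"
    and ieval :: "'c \<Rightarrow> ('l \<Rightarrow> 'v) \<Rightarrow> 'o \<Rightarrow> ('l \<Rightarrow> 'v) \<Rightarrow> 'l set \<Rightarrow> 'l set \<Rightarrow> bool"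
    and bot :: 'o
    and op :: "'c nbop"
    and S S' :: "('c, 'o, 'l, 'v) nbstate"
    and I I' :: "'l instr"
  assumes "instrumented_eval eval ieval"
    and "well_formed ieval S I"
    and "nb_step ieval bot op S I S' I'"
  shows "well_formed ieval S' I'"
  using assms(3,2)
proof (induction rule: nb_step.induct)
  case (step_run i C \<Sigma> out \<Sigma>' r w R' R W' W T' T Out)
  show ?case by (rule wf_run[where eval=eval and ieval=ieval, OF assms(1) step_run.prems step_run.hyps])
next
  case (step_edit i C c Out \<Sigma> T R W)
  show ?case by (rule wf_edit[OF step_edit.prems step_edit.hyps])
next
  case (step_insert i C c Out \<Sigma> T R W)
  show ?case by (rule wf_insert[OF step_insert.prems step_insert.hyps])
next
  case (step_delete i C R'' R W'' W T'' T Out \<Sigma>)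
  show ?case by (rule wf_delete[where eval=eval and ieval=ieval, OF assms(1) step_delete.prems step_delete.hyps])
next
  case (step_move_down s d C Out \<Sigma> I S1 I1 S2 I2)
  then show ?case by blast
next
  case (step_move_up s d C Out \<Sigma> I S1 I1 S2 I2)
  then show ?case by blast
qed

end
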